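(* Let $d\sigma^2$ be a smooth positive semi-definite metric on a $2$-manifold $M^2$, let $p$ be a singular point of $d\sigma^2$ at which the null space $\mathcal{N}_p$ is one-dimensional, and let $(u,v)$ be a local coordinate system centered at $p$, with $d\sigma^2=E\,du^2+2F\,du\,dv+G\,dv^2$. If $p$ is admissible and $(u,v)$ is adjusted at $p$, then $F=G=0$, $E_v=2F_u$, $G_u=G_v=0$ hold at $p=(0,0)$. Conversely, if there exists a local coordinate system $(u,v)$ centered at $p$ satisfying these identities at $(0,0)$, then $p$ is an admissible singular point and $(u,v)$ is adjusted at $p$.
   Context: Write $\langle X,Y\rangle=d\sigma^2(X,Y)$. A point is singular if $d\sigma^2$ is not positive definite there. The null space at $p$ is $\mathcal{N}_p=\{v\in T_pM^2: d\sigma^2(v,w)=0\ \forall w\in T_pM^2\}$. The Kossowski pseudo-connection is $\Gamma(X,Y,Z)=\tfrac12\bigl(X\langle Y,Z\rangle+Y\langle X,Z\rangle-Z\langle X,Y\rangle+\langle[X,Y],Z\rangle-\langle[X,Z],Y\rangle-\langle[Y,Z],X\rangle\bigr)$. A singular point $p$ is admissible if $\Gamma(V_1,V_2,V_3)(p)=0$ for all smooth vector fields $V_1,V_2,V_3$ with $V_3(p)\in\mathcal{N}_p$. A local coordinate system $(u,v)$ is adjusted at a singular point $p$ if $\partial/\partial v\in\mathcal{N}_p$. *)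

theory Defs
  imports "HOL-Analysis.Analysis"
begin

text \<open>Local coordinates (u,v) are points of real \<times> real; the point p is the origin (0,0).\<close>

definition dderiv :: "(real \<times> real \<Rightarrow> 'b::real_normed_vector) \<Rightarrow> real \<times> real \<Rightarrow> real \<times> real \<Rightarrow> 'b" where
  "dderiv f q w = frechet_derivative f (at q) w"

fun iter_deriv :: "(real \<times> real) list \<Rightarrow> (real \<times> real \<Rightarrow> 'b::real_normed_vector) \<Rightarrow> real \<times> real \<Rightarrow> 'b" where
  "iter_deriv [] f = f"
| "iter_deriv (w # ws) f = (\<lambda>q. dderiv (iter_deriv ws f) q w)"

definition smooth_on :: "(real \<times> real) set \<Rightarrow> (real \<times> real \<Rightarrow> 'b::real_normed_vector) \<Rightarrow> bool" where
  "smooth_on U f \<longleftrightarrow> (\<forall>ws. \<forall>q\<in>U. iter_deriv ws f differentiable (at q))"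

definition pd_u :: "(real \<times> real \<Rightarrow> real) \<Rightarrow> real \<times> real \<Rightarrow> real" where
  "pd_u f q = dderiv f q (1, 0)"
definition pd_v :: "(real \<times> real \<Rightarrow> real) \<Rightarrow> real \<times> real \<Rightarrow> real" where
  "pd_v f q = dderiv f q (0, 1)"

definition metric :: "(real \<times> real \<Rightarrow> real) \<Rightarrow> (real \<times> real \<Rightarrow> real) \<Rightarrow> (real \<times> real \<Rightarrow> real)
    \<Rightarrow> real \<times> real \<Rightarrow> real \<times> real \<Rightarrow> real \<times> real \<Rightarrow> real" where
  "metric E F G q a b = E q * fst a * fst b + F q * (fst a * snd b + snd a * fst b) + G q * snd a * snd b"

definition psd_metric_on where
  "psd_metric_on U E F G \<longleftrightarrow> (\<forall>q\<in>U. \<forall>w. metric E F G q w w \<ge> 0)"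

definition singular_at where
  "singular_at E F G q \<longleftrightarrow> \<not> (\<forall>w. w \<noteq> 0 \<longrightarrow> metric E F G q w w > 0)"

definition null_space :: "(real \<times> real \<Rightarrow> real) \<Rightarrow> (real \<times> real \<Rightarrow> real) \<Rightarrow> (real \<times> real \<Rightarrow> real)
    \<Rightarrow> real \<times> real \<Rightarrow> (real \<times> real) set" where
  "null_space E F G q = {w. \<forall>w'. metric E F G q w w' = 0}"

definition lie_bracket :: "(real \<times> real \<Rightarrow> real \<times> real) \<Rightarrow> (real \<times> real \<Rightarrow> real \<times> real) \<Rightarrow> real \<times> real \<Rightarrow> real \<times> real" where
  "lie_bracket X Y q = dderiv Y q (X q) - dderiv X q (Y q)"

definition inner_fun where
  "inner_fun E F G X Y = (\<lambda>q. metric E F G q (X q) (Y q))"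

definition kossowski where
  "kossowski E F G X Y Z q = (1/2) *
     ( dderiv (inner_fun E F G Y Z) q (X q) + dderiv (inner_fun E F G X Z) q (Y q)
     - dderiv (inner_fun E F G X Y) q (Z q)
     + metric E F G q (lie_bracket X Y q) (Z q) - metric E F G q (lie_bracket X Z q) (Y q)
     - metric E F G q (lie_bracket Y Z q) (X q))"

definition admissible_at where
  "admissible_at U E F G q \<longleftrightarrow> singular_at E F G q \<and>
     (\<forall>V1 V2 V3. smooth_on U V1 \<and> smooth_on U V2 \<and> smooth_on U V3 \<and> V3 q \<in> null_space E F G q
        \<longrightarrow> kossowski E F G V1 V2 V3 q = 0)"

definition adjusted_at where
  "adjusted_at E F G q \<longleftrightarrow> (0, 1) \<in> null_space E F G q"

end

theory Submission
  imports Defs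
begin

lemma dderiv_has:
  assumes "f differentiable (at q)"
  shows "(f has_derivative dderiv f q) (at q)"
  using assms unfolding dderiv_def by (simp add: frechet_derivative_works[symmetric])

lemma dderiv_lin:
  assumes "(f :: real\<times>real \<Rightarrow> 'b::real_normed_vector) differentiable (at q)"
  shows "dderiv f q (a, b) = a *\<^sub>R dderiv f q (1, 0) + b *\<^sub>R dderiv f q (0, 1)"
proof -
  have l: "linear (dderiv f q)" using linear_frechet_derivative[OF assms] unfolding dderiv_def by (simp add: fun_eq_iff)
  have "(a, b) = a *\<^sub>R (1::real, 0::real) + b *\<^sub>R (0, 1)" by simp
  then have "dderiv f q (a, b) = dderiv f q (a *\<^sub>R (1::real, 0::real) + b *\<^sub>R (0, 1))" by simp
  also have "\<dots> = a *\<^sub>R dderiv f q (1, 0) + b *\<^sub>R dderiv f q (0, 1)"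
    by (simp only: linear_add[OF l] linear_scale[OF l])
  finally show ?thesis .
qed

lemma dderiv_lin_real:
  assumes "(f :: real\<times>real \<Rightarrow> real) differentiable (at q)"
  shows "dderiv f q w = fst w * pd_u f q + snd w * pd_v f q"
  using dderiv_lin[OF assms, of "fst w" "snd w"] by (simp add: pd_u_def pd_v_def)

lemma dderiv_fst:
  assumes "(Y :: real\<times>real \<Rightarrow> real\<times>real) differentiable (at q)"
  shows "((\<lambda>x. fst (Y x)) has_derivative (\<lambda>h. fst (dderiv Y q h))) (at q)"
  using has_derivative_fst[OF dderiv_has[OF assms]] .

lemma dderiv_snd:
  assumes "(Y :: real\<times>real \<Rightarrow> real\<times>real) differentiable (at q)"
  shows "((\<lambda>x. snd (Y x)) has_derivative (\<lambda>h. snd (dderiv Y q h))) (at q)"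
  using has_derivative_snd[OF dderiv_has[OF assms]] .

lemma inner_deriv:
  assumes E: "E differentiable (at q)" and F: "F differentiable (at q)" and G: "G differentiable (at q)"
    and Y: "Y differentiable (at q)" and Z: "Z differentiable (at q)"
  shows "dderiv (inner_fun E F G Y Z) q w =
     dderiv E q w * fst (Y q) * fst (Z q) + E q * fst (dderiv Y q w) * fst (Z q) + E q * fst (Y q) * fst (dderiv Z q w)
   + dderiv F q w * (fst (Y q) * snd (Z q) + snd (Y q) * fst (Z q))
   + F q * (fst (dderiv Y q w) * snd (Z q) + fst (Y q) * snd (dderiv Z q w)
            + snd (dderiv Y q w) * fst (Z q) + snd (Y q) * fst (dderiv Z q w))
   + dderiv G q w * snd (Y q) * snd (Z q) + G q * snd (dderiv Y q w) * snd (Z q) + G q * snd (Y q) * snd (dderiv Z q w)"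
proof -
  note d = dderiv_has[OF E] dderiv_has[OF F] dderiv_has[OF G] dderiv_has[OF Y] dderiv_has[OF Z]
  have "(inner_fun E F G Y Z has_derivative (\<lambda>w.
     dderiv E q w * fst (Y q) * fst (Z q) + E q * fst (dderiv Y q w) * fst (Z q) + E q * fst (Y q) * fst (dderiv Z q w)
   + dderiv F q w * (fst (Y q) * snd (Z q) + snd (Y q) * fst (Z q))
   + F q * (fst (dderiv Y q w) * snd (Z q) + fst (Y q) * snd (dderiv Z q w)
            + snd (dderiv Y q w) * fst (Z q) + snd (Y q) * fst (dderiv Z q w))
   + dderiv G q w * snd (Y q) * snd (Z q) + G q * snd (dderiv Y q w) * snd (Z q) + G q * snd (Y q) * snd (dderiv Z q w))) (at q)"
    unfolding inner_fun_def metric_def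
    apply (rule has_derivative_eq_rhs)
     apply (rule derivative_intros d)+
    apply (rule ext)
    apply (simp add: distrib_left distrib_right)
    done
  from fun_cong[OF frechet_derivative_at[OF this], of w] show ?thesis unfolding dderiv_def by simp
qed


lemma dderiv_const: "dderiv (\<lambda>_. c) q w = 0"
  unfolding dderiv_def by (simp add: frechet_derivative_const)

lemma iter_const: "\<exists>k. iter_deriv ws (\<lambda>_. c) = (\<lambda>_. k)"
proof (induction ws)
  case Nil then show ?case by auto
next
  case (Cons w ws)
  then obtain k where "iter_deriv ws (\<lambda>_. c) = (\<lambda>_. k)" by auto
  then show ?case by (auto simp: dderiv_const)
qed

lemma smooth_const: "smooth_on U (\<lambda>_. c)"
  unfolding smooth_on_def
proof (intro allI ballI)
  fix ws q
  obtain k where "iter_deriv ws (\<lambda>_. c) = (\<lambda>_. k)" using iter_const by blast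
  then show "iter_deriv ws (\<lambda>_. c) differentiable at q" by simp
qed

lemma smooth_diff: "smooth_on U f \<Longrightarrow> q \<in> U \<Longrightarrow> f differentiable (at q)"
  unfolding smooth_on_def by (metis iter_deriv.simps(1))


theorem proposition2p7:
  fixes U :: "(real \<times> real) set" and E F G :: "real \<times> real \<Rightarrow> real"
  assumes "open U" and "(0, 0) \<in> U"
    and "smooth_on U E" and "smooth_on U F" and "smooth_on U G"
    and "psd_metric_on U E F G"
    and "singular_at E F G (0, 0)"
    and "dim (null_space E F G (0, 0)) = 1"
  shows "(admissible_at U E F G (0, 0) \<and> adjusted_at E F G (0, 0)) \<longleftrightarrow>
         (F (0, 0) = 0 \<and> G (0, 0) = 0 \<and> pd_v E (0, 0) = 2 * pd_u F (0, 0)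
          \<and> pd_u G (0, 0) = 0 \<and> pd_v G (0, 0) = 0)"
proof -
  define p :: "real \<times> real" where "p = (0, 0)"
  have dE: "E differentiable (at p)" using smooth_diff[OF assms(3) assms(2)] p_def by simp
  have dF: "F differentiable (at p)" using smooth_diff[OF assms(4) assms(2)] p_def by simp
  have dG: "G differentiable (at p)" using smooth_diff[OF assms(5) assms(2)] p_def by simp
  note lin = dderiv_lin_real[OF dE] dderiv_lin_real[OF dF] dderiv_lin_real[OF dG]
  have dc: "(\<lambda>_. c) differentiable (at p)" for c :: "real \<times> real" by simp
  have kc: "kossowski E F G (\<lambda>_. a) (\<lambda>_. b) (\<lambda>_. c) p = (1/2) *
     (dderiv E p a * fst b * fst c + dderiv F p a * (fst b * snd c + snd b * fst c) + dderiv G p a * snd b * snd c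
    + dderiv E p b * fst a * fst c + dderiv F p b * (fst a * snd c + snd a * fst c) + dderiv G p b * snd a * snd c
    - (dderiv E p c * fst a * fst b + dderiv F p c * (fst a * snd b + snd a * fst b) + dderiv G p c * snd a * snd b))"
    for a b c :: "real \<times> real"
    unfolding kossowski_def
    by (simp add: inner_deriv[OF dE dF dG dc dc] lie_bracket_def dderiv_const metric_def)
  show ?thesis
  proof
    assume H: "admissible_at U E F G (0, 0) \<and> adjusted_at E F G (0, 0)"
    have nul: "(0, 1) \<in> null_space E F G p" using H p_def unfolding adjusted_at_def by simp
    have "metric E F G p (0,1) (1,0) = 0" "metric E F G p (0,1) (0,1) = 0"
      using nul unfolding null_space_def by auto
    then have F0: "F p = 0" and G0: "G p = 0" unfolding metric_def by simp_all
    have adm: "kossowski E F G V1 V2 V3 p = 0" if "V3 p \<in> null_space E F G p" "smooth_on U V1" "smooth_on U V2" "smooth_on U V3" for V1 V2 V3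
      using H that p_def unfolding admissible_at_def by blast
    have k1: "kossowski E F G (\<lambda>_. (1,0)) (\<lambda>_. (1,0)) (\<lambda>_. (0,1)) p = 0"
      by (rule adm) (use nul smooth_const in auto)
    have k2: "kossowski E F G (\<lambda>_. (1,0)) (\<lambda>_. (0,1)) (\<lambda>_. (0,1)) p = 0"
      by (rule adm) (use nul smooth_const in auto)
    have k3: "kossowski E F G (\<lambda>_. (0,1)) (\<lambda>_. (0,1)) (\<lambda>_. (0,1)) p = 0"
      by (rule adm) (use nul smooth_const in auto)
    have "pd_v E p = 2 * pd_u F p" using k1 unfolding kc by (simp add: lin)
    moreover have "pd_u G p = 0" using k2 unfolding kc by (simp add: lin)
    moreover have "pd_v G p = 0" using k3 unfolding kc by (simp add: lin)
    ultimately show "F (0, 0) = 0 \<and> G (0, 0) = 0 \<and> pd_v E (0, 0) = 2 * pd_u F (0, 0)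
          \<and> pd_u G (0, 0) = 0 \<and> pd_v G (0, 0) = 0" using F0 G0 p_def by simp
  next
    assume H: "F (0, 0) = 0 \<and> G (0, 0) = 0 \<and> pd_v E (0, 0) = 2 * pd_u F (0, 0)
          \<and> pd_u G (0, 0) = 0 \<and> pd_v G (0, 0) = 0"
    then have F0: "F p = 0" and G0: "G p = 0" and I1: "pd_v E p = 2 * pd_u F p"
      and I2: "pd_u G p = 0" and I3: "pd_v G p = 0" using p_def by auto
    have adj: "adjusted_at E F G (0, 0)"
      unfolding adjusted_at_def null_space_def metric_def using F0 G0 p_def by simp
    have Ene: "E p \<noteq> 0"
    proof
      assume "E p = 0"
      then have "null_space E F G p = UNIV" unfolding null_space_def metric_def using F0 G0 by simp
      then have "dim (null_space E F G p) = 2" by (simp add: dim_UNIV DIM_prod)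
      then show False using assms(8) p_def by simp
    qed
    have "kossowski E F G V1 V2 V3 p = 0"
      if N: "V3 p \<in> null_space E F G p" and S: "smooth_on U V1" "smooth_on U V2" "smooth_on U V3"
      for V1 V2 V3
    proof -
      have d1: "V1 differentiable (at p)" using smooth_diff[OF S(1) assms(2)] p_def by simp
      have d2: "V2 differentiable (at p)" using smooth_diff[OF S(2) assms(2)] p_def by simp
      have d3: "V3 differentiable (at p)" using smooth_diff[OF S(3) assms(2)] p_def by simp
      have "metric E F G p (V3 p) (1, 0) = 0" using N unfolding null_space_def by auto
      then have z1: "fst (V3 p) = 0" using F0 G0 Ene unfolding metric_def by simp
      obtain c where v3: "V3 p = (0, c)" using z1 by (metis prod.collapse)
      show ?thesis
        unfolding kossowski_def
        apply (simp add: inner_deriv[OF dE dF dG] d1 d2 d3 lie_bracket_def metric_def lin F0 G0 v3 I1 I2 I3)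
        apply (simp add: distrib_left distrib_right left_diff_distrib right_diff_distrib)
        done
    qed
    then have "admissible_at U E F G (0, 0)"
      using assms(7) p_def unfolding admissible_at_def by blast
    then show "admissible_at U E F G (0, 0) \<and> adjusted_at E F G (0, 0)" using adj by simp
  qed
qed

end
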